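(* Let $\phi:[0,1]\to[0,1]$ be concave, $\phi(0)=0$, $\phi(1)=1$, continuous at $0$, with right derivative $\phi'(0)=\infty$. Then $\Lambda_\phi\subsetneq TM_\phi=M_\phi$.
   Context: $\Omega=[0,1]$ with Lebesgue measure $\mu$; $X^*(\omega)=\inf\{\lambda\ge0:\mu\{|X|>\lambda\}\le\omega\}$. $\Lambda_\phi$, $TM_\phi$, $M_\phi$ are the sets of measurable $X$ for which, respectively, the Lorentz norm $\|X\|_{\Lambda_\phi}=\int_0^1X^*(\omega)\phi'(\omega)\,d\omega$, the positive translation equivariant Marcinkiewicz norm $\|X\|_{TM_\phi}=\sup_{0<t<1}\{\frac{\phi(t)}{t}\int_0^tX^*\,d\omega+\frac{\phi(t)-1}{t-1}\int_t^1X^*\,d\omega\}$, and the Marcinkiewicz norm $\|X\|_{M_\phi}=\sup_{0<t\le1}\frac{\phi(t)}{t}\int_0^tX^*\,d\omega$ are finite. *)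

theory Defs
  imports "HOL-Analysis.Analysis"
begin

abbreviation Pspace :: "real measure" where
  "Pspace \<equiv> lebesgue_on {0..1}"

definition rv :: "(real \<Rightarrow> real) set" where
  "rv = borel_measurable Pspace"

definition drearr :: "(real \<Rightarrow> real) \<Rightarrow> real \<Rightarrow> real" where
  "drearr X w = Inf {l. 0 \<le> l \<and> measure Pspace {x \<in> {0..1}. \<bar>X x\<bar> > l} \<le> w}"

text \<open>Right derivative (used as phi'; it exists at every point of (0,1) for concave phi).\<close>
definition rderiv :: "(real \<Rightarrow> real) \<Rightarrow> real \<Rightarrow> real" where
  "rderiv f x = Lim (at_right 0) (\<lambda>h. (f (x + h) - f x) / h)"

definition lorentz_norm :: "(real \<Rightarrow> real) \<Rightarrow> (real \<Rightarrow> real) \<Rightarrow> ennreal" where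
  "lorentz_norm \<phi> X = (\<integral>\<^sup>+ w\<in>{0<..<1}. ennreal (drearr X w * rderiv \<phi> w) \<partial>lborel)"

definition tm_norm :: "(real \<Rightarrow> real) \<Rightarrow> (real \<Rightarrow> real) \<Rightarrow> ennreal" where
  "tm_norm \<phi> X = (SUP t\<in>{0<..<1}.
      ennreal (\<phi> t / t) * (\<integral>\<^sup>+ w\<in>{0<..<t}. ennreal (drearr X w) \<partial>lborel)
    + ennreal ((\<phi> t - 1) / (t - 1)) * (\<integral>\<^sup>+ w\<in>{t<..<1}. ennreal (drearr X w) \<partial>lborel))"

definition m_norm :: "(real \<Rightarrow> real) \<Rightarrow> (real \<Rightarrow> real) \<Rightarrow> ennreal" where
  "m_norm \<phi> X = (SUP t\<in>{0<..1}.
      ennreal (\<phi> t / t) * (\<integral>\<^sup>+ w\<in>{0<..<t}. ennreal (drearr X w) \<partial>lborel))"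

definition Lorentz_space :: "(real \<Rightarrow> real) \<Rightarrow> (real \<Rightarrow> real) set" where
  "Lorentz_space \<phi> = {X \<in> rv. lorentz_norm \<phi> X < \<infinity>}"

definition TM_space :: "(real \<Rightarrow> real) \<Rightarrow> (real \<Rightarrow> real) set" where
  "TM_space \<phi> = {X \<in> rv. tm_norm \<phi> X < \<infinity>}"

definition M_space :: "(real \<Rightarrow> real) \<Rightarrow> (real \<Rightarrow> real) set" where
  "M_space \<phi> = {X \<in> rv. m_norm \<phi> X < \<infinity>}"

end

theory Submission
  imports Defs
begin

locale cphi =
  fixes \<phi> :: "real \<Rightarrow> real"
  assumes rng: "\<forall>x\<in>{0..1}. \<phi> x \<in> {0..1}"
    and conc: "concave_on {0..1} \<phi>"
    and phi0: "\<phi> 0 = 0" and phi1: "\<phi> 1 = 1"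
    and cont0: "continuous (at 0 within {0..1}) \<phi>"
    and inf0: "filterlim (\<lambda>h. (\<phi> h - \<phi> 0) / h) at_top (at_right 0)"
begin

lemma chord:
  assumes "0 \<le> a" "a < c" "c < b" "b \<le> 1"
  shows "\<phi> c \<ge> \<phi> a + (\<phi> b - \<phi> a) * (c - a) / (b - a)"
proof -
  define t where "t = (c - a) / (b - a)"
  have t: "0 \<le> t" "t \<le> 1" using assms by (auto simp: t_def field_simps)
  have tb: "t * (b - a) = c - a" using assms by (simp add: t_def)
  have "(1 - t) *\<^sub>R a + t *\<^sub>R b = a + t * (b - a)" by (simp add: algebra_simps)
  then have "(1 - t) *\<^sub>R a + t *\<^sub>R b = c" using tb by simp
  moreover have "\<phi> ((1 - t) *\<^sub>R a + t *\<^sub>R b) \<ge> (1 - t) * \<phi> a + t * \<phi> b"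
    using concave_onD[OF conc t] assms by auto
  moreover have "(1 - t) * \<phi> a + t * \<phi> b = \<phi> a + (\<phi> b - \<phi> a) * t" by (simp add: algebra_simps)
  moreover have "(\<phi> b - \<phi> a) * t = (\<phi> b - \<phi> a) * (c - a) / (b - a)" by (simp add: t_def)
  ultimately show ?thesis by simp
qed

lemma slope1:
  assumes "0 \<le> a" "a < c" "c < b" "b \<le> 1"
  shows "(\<phi> b - \<phi> a) / (b - a) \<le> (\<phi> c - \<phi> a) / (c - a)"
  using chord[OF assms] assms by (simp add: field_simps)

lemma slope2:
  assumes "0 \<le> a" "a < c" "c < b" "b \<le> 1"
  shows "(\<phi> b - \<phi> c) / (b - c) \<le> (\<phi> b - \<phi> a) / (b - a)"
proof -
  have h: "\<phi> c * (b - a) \<ge> \<phi> a * (b - a) + (\<phi> b - \<phi> a) * (c - a)"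
    using chord[OF assms] assms by (simp add: field_simps)
  have "(\<phi> b - \<phi> c) * (b - a) \<le> (\<phi> b - \<phi> a) * (b - c)"
    using h by (simp add: algebra_simps)
  then show ?thesis using assms by (simp add: field_simps)
qed

lemma slope3:
  assumes "0 \<le> a" "a < c" "c < b" "b \<le> 1"
  shows "(\<phi> b - \<phi> c) / (b - c) \<le> (\<phi> c - \<phi> a) / (c - a)"
  using slope1[OF assms] slope2[OF assms] by linarith

lemma ge_id: assumes "0 \<le> x" "x \<le> 1" shows "x \<le> \<phi> x"
proof (cases "0 < x \<and> x < 1")
  case True
  then show ?thesis using chord[of 0 x 1] phi0 phi1 by simp
qed (use assms phi0 phi1 in auto)

lemma mono: assumes "0 \<le> x" "x \<le> y" "y \<le> 1" shows "\<phi> x \<le> \<phi> y"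
proof (cases "x < y \<and> y < 1")
  case True
  have "\<phi> x \<le> 1" using rng assms by auto
  moreover have "\<phi> y \<ge> \<phi> x + (\<phi> 1 - \<phi> x) * (y - x) / (1 - x)" using chord[of x y 1] True assms by simp
  moreover have "(\<phi> 1 - \<phi> x) * (y - x) / (1 - x) \<ge> 0" using True phi1 calculation(1) by simp
  ultimately show ?thesis by linarith
next
  case False
  then show ?thesis using assms rng phi1 by (cases "x = y") auto
qed

lemma le1: assumes "0 \<le> x" "x \<le> 1" shows "\<phi> x \<le> 1" using rng assms by auto
lemma ge0: assumes "0 \<le> x" "x \<le> 1" shows "0 \<le> \<phi> x" using rng assms by auto
lemma pos: assumes "0 < x" "x \<le> 1" shows "0 < \<phi> x" using ge_id[of x] assms by simp

lemma ratio: assumes "0 < a" "a \<le> b" "b \<le> 1" shows "\<phi> b / b \<le> \<phi> a / a"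
proof (cases "a = b")
  case False
  then have "\<phi> a \<ge> \<phi> 0 + (\<phi> b - \<phi> 0) * (a - 0) / (b - 0)" using chord[of 0 a b] assms by simp
  then show ?thesis using assms phi0 by (simp add: field_simps)
qed simp

lemma half: assumes "0 < x" "x \<le> 1" shows "\<phi> x / 2 \<le> \<phi> (x/2)"
  using ratio[of "x/2" x] assms by (simp add: field_simps)

definition q :: "real \<Rightarrow> real \<Rightarrow> real" where "q w h = (\<phi> (w + h) - \<phi> w) / h"

lemma q_anti: assumes "0 < w" "0 < h1" "h1 \<le> h2" "w + h2 \<le> 1" shows "q w h2 \<le> q w h1"
proof (cases "h1 = h2")
  case False
  then show ?thesis using slope1[of w "w+h1" "w+h2"] assms by (simp add: q_def)
qed simp

lemma q_bound: assumes "0 < w" "0 < h" "w + h \<le> 1" shows "q w h \<le> \<phi> w / w"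
  using slope3[of 0 w "w+h"] assms phi0 by (simp add: q_def)

lemma q_nonneg: assumes "0 < w" "0 < h" "w + h \<le> 1" shows "0 \<le> q w h"
  using mono[of w "w+h"] assms by (simp add: q_def)

lemma q_bdd: assumes "0 < w" shows "bdd_above (q w ` {0<..1-w})"
  using q_bound assms by (intro bdd_aboveI[of _ "\<phi> w / w"]) auto

lemma q_tendsto:
  assumes "0 < w" "w < 1"
  shows "(q w \<longlongrightarrow> (SUP h\<in>{0<..1-w}. q w h)) (at_right 0)"
proof (rule order_tendstoI)
  let ?L = "SUP h\<in>{0<..1-w}. q w h"
  have ne: "{0<..1-w} \<noteq> {}" using assms by auto
  fix y assume "y < ?L"
  then obtain h0 where h0: "h0 \<in> {0<..1-w}" "y < q w h0"
    using less_cSUP_iff[OF ne q_bdd[OF assms(1)]] by blast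
  have ev: "\<forall>\<^sub>F x in at_right 0. x \<in> {0<..<h0}" using eventually_at_right_real[of 0 h0] h0 by simp
  show "\<forall>\<^sub>F h in at_right 0. y < q w h"
    using ev
  proof (elim eventually_mono)
    fix h assume "h \<in> {0<..<h0}"
    then have "q w h0 \<le> q w h" using q_anti[of w h h0] h0 assms by auto
    then show "y < q w h" using h0 by simp
  qed
next
  let ?L = "SUP h\<in>{0<..1-w}. q w h"
  fix y assume "?L < y"
  have "1 - w > 0" using assms by simp
  show "\<forall>\<^sub>F h in at_right 0. q w h < y"
    using eventually_at_right_real[OF \<open>1 - w > 0\<close>]
  proof (elim eventually_mono)
    fix h assume "h \<in> {0<..<1-w}"
    then have "q w h \<le> ?L" using q_bdd[of w] assms by (intro cSUP_upper) auto
    then show "q w h < y" using \<open>?L < y\<close> by simp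
  qed
qed

lemma rderiv_eq: assumes "0 < w" "w < 1" shows "rderiv \<phi> w = (SUP h\<in>{0<..1-w}. q w h)"
proof -
  have "((\<lambda>h. (\<phi> (w + h) - \<phi> w) / h) \<longlongrightarrow> (SUP h\<in>{0<..1-w}. q w h)) (at_right 0)"
    using q_tendsto[OF assms] by (simp add: q_def[abs_def])
  then show ?thesis unfolding rderiv_def by (intro tendsto_Lim) auto
qed

lemma rd_ge: assumes "0 < w" "0 < h" "w + h \<le> 1" shows "(\<phi> (w + h) - \<phi> w) / h \<le> rderiv \<phi> w"
proof -
  have "q w h \<le> (SUP h\<in>{0<..1-w}. q w h)" using q_bdd[of w] assms by (intro cSUP_upper) auto
  then show ?thesis using rderiv_eq[of w] assms by (simp add: q_def)
qed

lemma rd_nonneg: assumes "0 < w" "w < 1" shows "0 \<le> rderiv \<phi> w"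
  using rd_ge[of w "1 - w"] q_nonneg[of w "1-w"] assms by (simp add: q_def)

lemma rd_anti: assumes "0 < w1" "w1 \<le> w2" "w2 < 1" shows "rderiv \<phi> w2 \<le> rderiv \<phi> w1"
proof (cases "w1 = w2")
  case False
  have "rderiv \<phi> w2 = (SUP h\<in>{0<..1-w2}. q w2 h)" using rderiv_eq assms by simp
  also have "\<dots> \<le> q w1 (w2 - w1)"
  proof (rule cSUP_least)
    show "{0<..1-w2} \<noteq> {}" using assms by auto
    fix h assume "h \<in> {0<..1-w2}"
    then show "q w2 h \<le> q w1 (w2 - w1)"
      using slope3[of w1 w2 "w2 + h"] assms False by (simp add: q_def)
  qed
  also have "\<dots> \<le> rderiv \<phi> w1" using rd_ge[of w1 "w2 - w1"] assms False by (simp add: q_def)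
  finally show ?thesis .
qed simp

lemma step_bound:
  fixes n :: nat
  assumes s: "0 < s" "s \<le> 1" and n: "2 \<le> n"
  shows "ennreal (\<phi> s - \<phi> (s / n)) \<le> (\<integral>\<^sup>+ w\<in>{0<..<s}. ennreal (rderiv \<phi> w) \<partial>lborel)"
proof -
  define h where "h = s / n"
  have hpos: "0 < h" using s n by (simp add: h_def)
  have nh: "real n * h = s" using n by (simp add: h_def)
  define c where "c k = rderiv \<phi> ((real k + 1) * h)" for k :: nat
  define st where "st w = (\<Sum>k<n-1. ennreal (c k) * indicator {real k * h<..(real k + 1) * h} w)" for w
  have pt: "st w \<le> ennreal (rderiv \<phi> w) * indicator {0<..<s} w" for w
  proof (cases "\<exists>j<n-1. w \<in> {real j * h<..(real j + 1) * h}")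
    case False
    have "st w = 0" unfolding st_def
    proof (intro sum.neutral ballI)
      fix k assume "k \<in> {..<n-1}"
      then have "w \<notin> {real k * h<..(real k + 1) * h}" using False by blast
      then show "ennreal (c k) * indicator {real k * h<..(real k + 1) * h} w = 0"
        by (metis indicator_simps(2) mult_zero_right)
    qed
    then show ?thesis by simp
  next
    case True
    then obtain j where j: "j < n - 1" "w \<in> {real j * h<..(real j + 1) * h}" by blast
    have uniq: "k = j" if "w \<in> {real k * h<..(real k + 1) * h}" for k
    proof -
      have "real k * h < (real j + 1) * h" "real j * h < (real k + 1) * h" using that j by auto
      then have "real k < real j + 1" "real j < real k + 1" using hpos by (simp_all add: mult_less_cancel_right)
      then show ?thesis by linarith
    qed
    have "st w = (\<Sum>k\<in>{j}. ennreal (c k) * indicator {real k * h<..(real k + 1) * h} w)"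
      unfolding st_def
    proof (intro sum.mono_neutral_right ballI)
      show "{j} \<subseteq> {..<n-1}" using j by simp
      fix k assume "k \<in> {..<n-1} - {j}"
      then have "w \<notin> {real k * h<..(real k + 1) * h}" using uniq by blast
      then show "ennreal (c k) * indicator {real k * h<..(real k + 1) * h} w = 0"
        by (metis indicator_simps(2) mult_zero_right)
    qed simp
    also have "\<dots> = ennreal (c j) * indicator {real j * h<..(real j + 1) * h} w" by (simp only: sum.insert finite.emptyI empty_iff sum.empty add_0_right not_False_eq_True)
    also have "\<dots> = ennreal (c j)" by (simp only: indicator_simps(1)[OF j(2)] mult_1_right)
    also have "\<dots> \<le> ennreal (rderiv \<phi> w)"
    proof -
      have jn: "real j + 1 \<le> real n - 1" using j by linarith
      have "(real j + 1) * h \<le> (real n - 1) * h" using jn hpos by (intro mult_right_mono) auto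
      then have "(real j + 1) * h < 1" using nh hpos s by (simp add: algebra_simps)
      moreover have "0 < w" proof -
        have "0 \<le> real j * h" using hpos by simp
        then show ?thesis using j by simp
      qed
      ultimately show ?thesis unfolding c_def using j by (intro ennreal_leI rd_anti) auto
    qed
    also have "\<dots> = ennreal (rderiv \<phi> w) * indicator {0<..<s} w"
    proof -
      have jn: "real j + 1 \<le> real n - 1" using j by linarith
      have "(real j + 1) * h \<le> (real n - 1) * h" using jn hpos by (intro mult_right_mono) auto
      then have "w < s" using j nh hpos by (simp add: algebra_simps)
      moreover have "0 < w" proof -
        have "0 \<le> real j * h" using hpos by simp
        then show ?thesis using j by simp
      qed
      ultimately show ?thesis by simp
    qed
    finally show ?thesis .
  qed
  have "(\<integral>\<^sup>+ w. st w \<partial>lborel) = (\<Sum>k<n-1. ennreal (c k) * ennreal h)"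
    unfolding st_def using hpos
    by (subst nn_integral_sum) (auto simp: nn_integral_cmult_indicator algebra_simps)
  also have "\<dots> = ennreal (\<Sum>k<n-1. c k * h)"
  proof -
    have "ennreal (c k) * ennreal h = ennreal (c k * h)" for k using hpos by (simp add: ennreal_mult'')
    moreover have "0 \<le> c k * h" if "k < n - 1" for k
    proof -
      have "real k + 1 \<le> real n - 1" using that by linarith
      then have "(real k + 1) * h \<le> (real n - 1) * h" using hpos by (intro mult_right_mono) auto
      then have "(real k + 1) * h < 1" using nh hpos s by (simp add: algebra_simps)
      then show ?thesis unfolding c_def using hpos by (intro mult_nonneg_nonneg rd_nonneg) auto
    qed
    ultimately show ?thesis by (metis (no_types, lifting) sum.cong sum_ennreal lessThan_iff)
  qed
  finally have I1: "(\<integral>\<^sup>+ w. st w \<partial>lborel) = ennreal (\<Sum>k<n-1. c k * h)" .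
  have "(\<Sum>k<n-1. c k * h) \<ge> (\<Sum>k<n-1. \<phi> ((real (Suc k) + 1) * h) - \<phi> ((real k + 1) * h))"
  proof (rule sum_mono)
    fix k assume "k \<in> {..<n-1}"
    then have "real k + 2 \<le> real n" by auto
    then have "(real k + 2) * h \<le> real n * h" using hpos by (intro mult_right_mono) auto
    then have A: "(real k + 1) * h + h \<le> 1" using nh s by (simp add: algebra_simps)
    have B: "0 < (real k + 1) * h" using hpos by simp
    have C: "(real (Suc k) + 1) * h = (real k + 1) * h + h" by (simp add: algebra_simps)
    have "(\<phi> ((real k + 1) * h + h) - \<phi> ((real k + 1) * h)) / h \<le> c k"
      using rd_ge[OF B hpos A] unfolding c_def .
    then show "\<phi> ((real (Suc k) + 1) * h) - \<phi> ((real k + 1) * h) \<le> c k * h"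
      using hpos C by (simp add: divide_le_eq)
  qed
  also have "(\<Sum>k<n-1. \<phi> ((real (Suc k) + 1) * h) - \<phi> ((real k + 1) * h)) = \<phi> ((real (n - 1) + 1) * h) - \<phi> ((real 0 + 1) * h)"
    by (rule sum_lessThan_telescope[where f = "\<lambda>k. \<phi> ((real k + 1) * h)"])
  also have "\<dots> = \<phi> s - \<phi> (s / n)" using n nh by (simp add: h_def of_nat_diff)
  finally have "ennreal (\<phi> s - \<phi> (s / n)) \<le> (\<integral>\<^sup>+ w. st w \<partial>lborel)" using I1 by (simp add: ennreal_leI)
  also have "\<dots> \<le> (\<integral>\<^sup>+ w\<in>{0<..<s}. ennreal (rderiv \<phi> w) \<partial>lborel)"
    by (intro nn_integral_mono pt)
  finally show ?thesis .
qed

lemma int_ge: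
  assumes s: "0 < s" "s \<le> 1"
  shows "ennreal (\<phi> s) \<le> (\<integral>\<^sup>+ w\<in>{0<..<s}. ennreal (rderiv \<phi> w) \<partial>lborel)"
proof (rule ennreal_le_epsilon)
  fix e :: real assume e: "0 < e"
  obtain d where d: "d > 0" "\<forall>x'\<in>{0..1}. dist x' 0 < d \<longrightarrow> dist (\<phi> x') (\<phi> 0) < e"
    using cont0 e unfolding continuous_within_eps_delta by blast
  define n :: nat where "n = nat \<lceil>s / d\<rceil> + 2"
  have n2: "2 \<le> n" by (simp add: n_def)
  have "s / d < real n" unfolding n_def by linarith
  then have "s < real n * d" using d by (simp add: divide_less_eq)
  then have sn: "s / real n < d" using n2 by (simp add: divide_less_eq mult.commute)
  have sn0: "0 \<le> s / real n" "s / real n \<le> 1" using s n2 by (auto simp: divide_le_eq)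
  have "dist (\<phi> (s / real n)) (\<phi> 0) < e" using d sn sn0 by (auto simp: dist_real_def)
  then have "\<phi> (s / real n) < e" using phi0 ge0[of "s / real n"] sn0 by (simp add: dist_real_def)
  moreover have "\<phi> (s / real n) \<le> \<phi> s" using mono[of "s / real n" s] sn0 s n2 by (simp add: divide_le_eq)
  ultimately have "ennreal (\<phi> s) \<le> ennreal (\<phi> s - \<phi> (s / real n)) + ennreal e"
  proof -
    assume a: "\<phi> (s / real n) < e" "\<phi> (s / real n) \<le> \<phi> s"
    have "ennreal (\<phi> s) \<le> ennreal (\<phi> s - \<phi> (s / real n) + e)" using a by (intro ennreal_leI) simp
    also have "\<dots> = ennreal (\<phi> s - \<phi> (s / real n)) + ennreal e" using a e by (intro ennreal_plus) auto
    finally show ?thesis .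
  qed
  also have "\<dots> \<le> (\<integral>\<^sup>+ w\<in>{0<..<s}. ennreal (rderiv \<phi> w) \<partial>lborel) + ennreal e"
    using step_bound[OF s n2] by (intro add_right_mono)
  finally show "ennreal (\<phi> s) \<le> (\<integral>\<^sup>+ w\<in>{0<..<s}. ennreal (rderiv \<phi> w) \<partial>lborel) + ennreal e" .
qed

end

lemma anti_meas:
  fixes f :: "real \<Rightarrow> real"
  assumes "\<And>x y. 0 < x \<Longrightarrow> x \<le> y \<Longrightarrow> y < 1 \<Longrightarrow> f y \<le> f x"
  shows "(\<lambda>w. indicator {0<..<1} w * f w) \<in> borel_measurable borel"
proof -
  have "mono_on {0<..<1} (\<lambda>x. - f x)" using assms by (auto intro!: mono_onI)
  then have "(\<lambda>x. - f x) \<in> borel_measurable (restrict_space borel {0<..<1})"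
    by (rule borel_measurable_mono_on_fnc)
  then have "(\<lambda>x. - (- f x)) \<in> borel_measurable (restrict_space borel {0<..<1})"
    by (rule borel_measurable_uminus)
  then have "f \<in> borel_measurable (restrict_space borel {0<..<1})" by simp
  then have "(\<lambda>x. indicator {0<..<1} x *\<^sub>R f x) \<in> borel_measurable borel"
    by (subst (asm) borel_measurable_restrict_space_iff) auto
  then show ?thesis by simp
qed

lemma layer_eq:
  fixes f :: "real \<Rightarrow> real" and H :: "real \<Rightarrow> ennreal"
  assumes fm[measurable]: "f \<in> borel_measurable borel" and Hm[measurable]: "H \<in> borel_measurable borel"
    and fnn: "\<And>w. 0 \<le> f w"
  shows "(\<integral>\<^sup>+ w. ennreal (f w) * H w \<partial>lborel)
    = (\<integral>\<^sup>+ l. (\<integral>\<^sup>+ w. indicator {w. l < f w} w * H w \<partial>lborel) * indicator {0..} l \<partial>lborel)"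
proof -
  have e: "ennreal (f w) = (\<integral>\<^sup>+ l. indicator {0..<f w} l \<partial>lborel)" for w
    using fnn[of w] by simp
  have "(\<integral>\<^sup>+ w. ennreal (f w) * H w \<partial>lborel)
      = (\<integral>\<^sup>+ w. (\<integral>\<^sup>+ l. indicator {0..<f w} l * H w \<partial>lborel) \<partial>lborel)"
    by (intro nn_integral_cong) (simp add: e nn_integral_multc)
  also have "\<dots> = (\<integral>\<^sup>+ l. (\<integral>\<^sup>+ w. indicator {0..<f w} l * H w \<partial>lborel) \<partial>lborel)"
  proof (rule lborel_pair.Fubini'[symmetric])
    have "(\<lambda>p. indicator {0..<f (fst p)} (snd p) * H (fst p) :: ennreal) \<in> borel_measurable (lborel \<Otimes>\<^sub>M lborel)"
    proof -
      have "(\<lambda>p::real\<times>real. indicator {0..<f (fst p)} (snd p) * H (fst p) :: ennreal)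
          = (\<lambda>p. (if 0 \<le> snd p \<and> snd p < f (fst p) then H (fst p) else 0))"
        by (auto simp: indicator_def)
      moreover have "(\<lambda>p::real\<times>real. (if 0 \<le> snd p \<and> snd p < f (fst p) then H (fst p) else 0)) \<in> borel_measurable (lborel \<Otimes>\<^sub>M lborel)"
        by measurable
      ultimately show ?thesis by simp
    qed
    then show "(\<lambda>(w, l). indicator {0..<f w} l * H w) \<in> borel_measurable (lborel \<Otimes>\<^sub>M lborel)"
      by (simp add: case_prod_unfold)
  qed
  also have "\<dots> = (\<integral>\<^sup>+ l. (\<integral>\<^sup>+ w. indicator {w. l < f w} w * H w \<partial>lborel) * indicator {0..} l \<partial>lborel)"
  proof (intro nn_integral_cong)
    fix l :: real
    show "(\<integral>\<^sup>+ w. indicator {0..<f w} l * H w \<partial>lborel) = (\<integral>\<^sup>+ w. indicator {w. l < f w} w * H w \<partial>lborel) * indicator {0..} l"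
      by (cases "0 \<le> l") (auto simp: indicator_def)
  qed
  finally show ?thesis .
qed


lemma cheb:
  fixes f g :: "real \<Rightarrow> real"
  assumes fm[measurable]: "f \<in> borel_measurable borel" and gm[measurable]: "g \<in> borel_measurable borel"
    and fnn: "\<And>w. 0 \<le> f w" and gnn: "\<And>w. 0 \<le> g w"
    and fanti: "\<And>x y. 0 < x \<Longrightarrow> x \<le> y \<Longrightarrow> y < t \<Longrightarrow> f y \<le> f x"
    and c: "0 \<le> c" and t: "0 < t"
    and G: "\<And>m. 0 < m \<Longrightarrow> m \<le> t \<Longrightarrow> ennreal (c * m) \<le> (\<integral>\<^sup>+ w\<in>{0<..<m}. ennreal (g w) \<partial>lborel)"
  shows "ennreal c * (\<integral>\<^sup>+ w\<in>{0<..<t}. ennreal (f w) \<partial>lborel) \<le> (\<integral>\<^sup>+ w\<in>{0<..<t}. ennreal (f w * g w) \<partial>lborel)"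
proof -
  define H1 where "H1 w = ennreal c * indicator {0<..<t} w" for w
  define H2 where "H2 w = ennreal (g w) * indicator {0<..<t} w" for w
  have [measurable]: "H1 \<in> borel_measurable borel" "H2 \<in> borel_measurable borel"
    unfolding H1_def H2_def by measurable
  have L: "ennreal c * (\<integral>\<^sup>+ w\<in>{0<..<t}. ennreal (f w) \<partial>lborel) = (\<integral>\<^sup>+ w. ennreal (f w) * H1 w \<partial>lborel)"
    by (subst nn_integral_cmult[symmetric]) (auto simp: H1_def mult_ac intro!: nn_integral_cong)
  have R: "(\<integral>\<^sup>+ w\<in>{0<..<t}. ennreal (f w * g w) \<partial>lborel) = (\<integral>\<^sup>+ w. ennreal (f w) * H2 w \<partial>lborel)"
    using fnn gnn by (auto simp: H2_def mult_ac ennreal_mult intro!: nn_integral_cong)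
  have inner: "(\<integral>\<^sup>+ w. indicator {w. l < f w} w * H1 w \<partial>lborel) \<le> (\<integral>\<^sup>+ w. indicator {w. l < f w} w * H2 w \<partial>lborel)"
    if l: "0 \<le> l" for l
  proof -
    define S where "S = {w. l < f w \<and> 0 < w \<and> w < t}"
    show ?thesis
    proof (cases "S = {}")
      case True
      have z: "indicator {w. l < f w} w * H1 w = 0" for w
      proof -
        have "w \<notin> S" using True by simp
        then show "indicator {w. l < f w} w * H1 w = 0" by (auto simp: H1_def S_def indicator_def)
      qed
      have "(\<integral>\<^sup>+ w. indicator {w. l < f w} w * H1 w \<partial>lborel) = 0"
        by (simp add: z)
      then show ?thesis by simp
    next
      case False
      have bdd: "bdd_above S" unfolding S_def by (intro bdd_aboveI[of _ t]) auto
      define m where "m = Sup S"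
      obtain w0 where w0: "w0 \<in> S" using False by blast
      have mt: "m \<le> t" unfolding m_def
      proof (rule cSup_least)
        show "S \<noteq> {}" using False .
        fix x assume "x \<in> S" then show "x \<le> t" by (simp add: S_def)
      qed
      have m0: "0 < m" using cSup_upper[OF w0 bdd] w0 unfolding m_def S_def by simp
      have "(\<integral>\<^sup>+ w. indicator {w. l < f w} w * H1 w \<partial>lborel) \<le> (\<integral>\<^sup>+ w. ennreal c * indicator {0<..m} w \<partial>lborel)"
      proof (intro nn_integral_mono)
        fix w
        show "indicator {w. l < f w} w * H1 w \<le> ennreal c * indicator {0<..m} w"
        proof (cases "w \<in> S")
          case True
          then have "w \<le> m" unfolding m_def using bdd by (intro cSup_upper)
          then show ?thesis using True by (auto simp: H1_def S_def indicator_def)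
        next
          case False
          then show ?thesis by (auto simp: H1_def S_def indicator_def)
        qed
      qed
      also have "\<dots> = ennreal (c * m)" using m0 c by (subst nn_integral_cmult_indicator) (auto simp: ennreal_mult)
      also have "\<dots> \<le> (\<integral>\<^sup>+ w\<in>{0<..<m}. ennreal (g w) \<partial>lborel)" using G m0 mt by simp
      also have "\<dots> \<le> (\<integral>\<^sup>+ w. indicator {w. l < f w} w * H2 w \<partial>lborel)"
      proof (intro nn_integral_mono)
        fix w
        show "ennreal (g w) * indicator {0<..<m} w \<le> indicator {w. l < f w} w * H2 w"
        proof (cases "w \<in> {0<..<m}")
          case True
          then obtain w' where w': "w' \<in> S" "w < w'" using less_cSup_iff[OF False bdd, of w] unfolding m_def by auto
          then have "f w' \<le> f w" using True by (intro fanti) (auto simp: S_def)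
          then have "l < f w" using w' by (auto simp: S_def)
          moreover have "w < t" using True mt by simp
          ultimately show ?thesis using True by (auto simp: H2_def indicator_def)
        qed simp
      qed
      finally show ?thesis .
    qed
  qed
  show ?thesis
    unfolding L R
    apply (subst layer_eq[OF fm _ fnn], measurable)+
  proof (rule nn_integral_mono)
    fix l :: real
    show "(\<integral>\<^sup>+ w. indicator {w. l < f w} w * H1 w \<partial>lborel) * indicator {0..} l
        \<le> (\<integral>\<^sup>+ w. indicator {w. l < f w} w * H2 w \<partial>lborel) * indicator {0..} l"
      using inner[of l] by (cases "0 \<le> l") auto
  qed
qed


definition DS :: "(real \<Rightarrow> real) \<Rightarrow> real \<Rightarrow> real set" where
  "DS X w = {l. 0 \<le> l \<and> measure Pspace {x \<in> {0..1}. \<bar>X x\<bar> > l} \<le> w}"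

lemma drearr_DS: "drearr X w = Inf (DS X w)" by (simp add: drearr_def DS_def)

lemma DS_nonempty:
  assumes X: "X \<in> rv" and w: "0 < w"
  shows "DS X w \<noteq> {}"
proof -
  interpret finite_measure Pspace by (rule finite_measure_lebesgue_on) auto
  define A where "A n = {x \<in> {0..1}. \<bar>X x\<bar> > real n}" for n :: nat
  have Xm[measurable]: "X \<in> borel_measurable Pspace" using X by (simp add: rv_def)
  have "A n \<in> sets Pspace" for n
  proof -
    have "A n = {x \<in> space Pspace. \<bar>X x\<bar> > real n}" by (simp add: A_def)
    also have "\<dots> \<in> sets Pspace" by measurable
    finally show ?thesis .
  qed
  moreover have "decseq A" unfolding A_def by (intro decseq_SucI) auto
  ultimately have lim: "(\<lambda>n. measure Pspace (A n)) \<longlonglongrightarrow> measure Pspace (\<Inter>i. A i)"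
    by (intro finite_Lim_measure_decseq) auto
  have "(\<Inter>i. A i) = {}"
  proof (safe)
    fix x assume "x \<in> (\<Inter>i. A i)"
    then have "\<bar>X x\<bar> > real (nat \<lceil>\<bar>X x\<bar>\<rceil>)" unfolding A_def by blast
    then show "x \<in> {}" by linarith
  qed
  with lim have "(\<lambda>n. measure Pspace (A n)) \<longlonglongrightarrow> 0" by simp
  then obtain N where "\<forall>n\<ge>N. \<bar>measure Pspace (A n) - 0\<bar> < w" using w by (metis LIMSEQ_iff real_norm_def)
  then have "measure Pspace (A N) \<le> w" by auto
  then have "real N \<in> DS X w" by (simp add: DS_def A_def)
  then show ?thesis by blast
qed

lemma DS_bdd: "bdd_below (DS X w)" by (intro bdd_belowI[of _ 0]) (auto simp: DS_def)

lemma drearr_nonneg: assumes "X \<in> rv" "0 < w" shows "0 \<le> drearr X w"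
  unfolding drearr_DS using DS_nonempty[OF assms] by (intro cInf_greatest) (auto simp: DS_def)

lemma drearr_anti: assumes "X \<in> rv" "0 < w1" "w1 \<le> w2" shows "drearr X w2 \<le> drearr X w1"
  unfolding drearr_DS
proof (rule cInf_superset_mono)
  show "DS X w1 \<noteq> {}" using DS_nonempty assms by simp
  show "bdd_below (DS X w2)" by (rule DS_bdd)
  show "DS X w1 \<subseteq> DS X w2" using assms by (auto simp: DS_def)
qed


definition FD :: "(real \<Rightarrow> real) \<Rightarrow> real \<Rightarrow> real" where
  "FD X w = indicator {0<..<1} w * drearr X w"

lemma FD_meas: assumes "X \<in> rv" shows "FD X \<in> borel_measurable borel"
  unfolding FD_def[abs_def] using drearr_anti[OF assms] by (intro anti_meas) auto

lemma FD_nonneg: assumes "X \<in> rv" shows "0 \<le> FD X w"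
  using drearr_nonneg[OF assms, of w] by (auto simp: FD_def indicator_def)

lemma FD_eq: "w \<in> {0<..<1} \<Longrightarrow> FD X w = drearr X w" by (simp add: FD_def)

context cphi
begin

definition GD :: "real \<Rightarrow> real" where "GD w = indicator {0<..<1} w * rderiv \<phi> w"

lemma GD_meas: "GD \<in> borel_measurable borel"
  unfolding GD_def[abs_def] using rd_anti by (intro anti_meas) auto

lemma GD_nonneg: "0 \<le> GD w"
  using rd_nonneg[of w] by (auto simp: GD_def indicator_def)

lemma int_cong_sub:
  fixes u v :: "real \<Rightarrow> ennreal"
  assumes "\<And>w. w \<in> A \<Longrightarrow> u w = v w"
  shows "(\<integral>\<^sup>+ w\<in>A. u w \<partial>lborel) = (\<integral>\<^sup>+ w\<in>A. v w \<partial>lborel)"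
  using assms by (intro nn_integral_cong) (auto simp: indicator_def)

lemma mterm_le_lorentz:
  assumes X: "X \<in> rv" and t: "0 < t" "t \<le> 1"
  shows "ennreal (\<phi> t / t) * (\<integral>\<^sup>+ w\<in>{0<..<t}. ennreal (drearr X w) \<partial>lborel) \<le> lorentz_norm \<phi> X"
proof -
  have "ennreal (\<phi> t / t) * (\<integral>\<^sup>+ w\<in>{0<..<t}. ennreal (FD X w) \<partial>lborel)
      \<le> (\<integral>\<^sup>+ w\<in>{0<..<t}. ennreal (FD X w * GD w) \<partial>lborel)"
  proof (rule cheb[OF FD_meas[OF X] GD_meas FD_nonneg[OF X] GD_nonneg])
    show "FD X y \<le> FD X x" if "0 < x" "x \<le> y" "y < t" for x y
      using that t drearr_anti[OF X, of x y] by (simp add: FD_def)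
    show "0 \<le> \<phi> t / t" using ge0[of t] t by simp
    show "0 < t" by fact
    fix m assume m: "0 < m" "m \<le> t"
    have "\<phi> t / t * m \<le> \<phi> m" using ratio[of m t] m t by (simp add: field_simps)
    then have "ennreal (\<phi> t / t * m) \<le> ennreal (\<phi> m)" by (rule ennreal_leI)
    also have "\<dots> \<le> (\<integral>\<^sup>+ w\<in>{0<..<m}. ennreal (rderiv \<phi> w) \<partial>lborel)" using int_ge m t by simp
    also have "\<dots> = (\<integral>\<^sup>+ w\<in>{0<..<m}. ennreal (GD w) \<partial>lborel)"
      using m t by (intro int_cong_sub) (auto simp: GD_def)
    finally show "ennreal (\<phi> t / t * m) \<le> (\<integral>\<^sup>+ w\<in>{0<..<m}. ennreal (GD w) \<partial>lborel)" .
  qed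
  moreover have "(\<integral>\<^sup>+ w\<in>{0<..<t}. ennreal (FD X w) \<partial>lborel) = (\<integral>\<^sup>+ w\<in>{0<..<t}. ennreal (drearr X w) \<partial>lborel)"
    using t by (intro int_cong_sub) (auto simp: FD_def)
  moreover have "(\<integral>\<^sup>+ w\<in>{0<..<t}. ennreal (FD X w * GD w) \<partial>lborel) \<le> lorentz_norm \<phi> X"
    unfolding lorentz_norm_def
  proof (intro nn_integral_mono)
    fix w
    show "ennreal (FD X w * GD w) * indicator {0<..<t} w \<le> ennreal (drearr X w * rderiv \<phi> w) * indicator {0<..<1} w"
      using t by (cases "0 < w \<and> w < t") (auto simp: FD_def GD_def indicator_def)
  qed
  ultimately show ?thesis by simp
qed

lemma m_le_lorentz: assumes X: "X \<in> rv" shows "m_norm \<phi> X \<le> lorentz_norm \<phi> X"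
  unfolding m_norm_def using mterm_le_lorentz[OF X] by (intro SUP_least) auto

end


lemma int01_SUP:
  fixes F :: "real \<Rightarrow> real"
  assumes [measurable]: "F \<in> borel_measurable borel"
  shows "(\<integral>\<^sup>+ w\<in>{0<..<1}. ennreal (F w) \<partial>lborel)
     = (SUP i::nat. (\<integral>\<^sup>+ w\<in>{0<..<1 - 1 / (real i + 2)}. ennreal (F w) \<partial>lborel))"
proof -
  define f where "f i w = ennreal (F w) * indicator {0<..<1 - 1 / (real i + 2)} w" for i :: nat and w
  have inc: "incseq f"
  proof (rule incseq_SucI, rule le_funI)
    fix i w
    have "1 / (real (Suc i) + 2) \<le> 1 / (real i + 2)" by (simp add: frac_le)
    then show "f i w \<le> f (Suc i) w" unfolding f_def
      by (intro mult_left_mono) (auto simp: indicator_def)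
  qed
  have meas: "f i \<in> borel_measurable lborel" for i unfolding f_def by measurable
  have pt: "(SUP i. f i w) = ennreal (F w) * indicator {0<..<1} w" for w
  proof (cases "0 < w \<and> w < 1")
    case True
    obtain i :: nat where i: "1 / (1 - w) < real i" using reals_Archimedean2 by blast
    have "1 / (real i + 2) < 1 - w"
    proof -
      have "1 < real i * (1 - w)" using i True by (simp add: divide_less_eq)
      then have "1 < (real i + 2) * (1 - w)" using True by (smt (verit) mult_right_mono)
      then show ?thesis using True by (simp add: divide_less_eq mult.commute)
    qed
    then have fi: "f i w = ennreal (F w)" using True by (simp add: f_def)
    have "(SUP i. f i w) = ennreal (F w)"
    proof (rule antisym)
      show "(SUP i. f i w) \<le> ennreal (F w)" by (intro SUP_least) (auto simp: f_def indicator_def)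
      show "ennreal (F w) \<le> (SUP i. f i w)" using fi by (metis SUP_upper UNIV_I)
    qed
    then show ?thesis using True by simp
  next
    case False
    have "f i w = 0" for i
    proof -
      have "0 \<le> 1 / (real i + 2)" by simp
      then have "\<not> (0 < w \<and> w < 1 - 1 / (real i + 2))" using False by linarith
      then have "w \<notin> {0<..<1 - 1 / (real i + 2)}" by simp
      then show ?thesis by (simp add: f_def)
    qed
    then show ?thesis using False by (simp add: indicator_def)
  qed
  have "(\<integral>\<^sup>+ w. (SUP i. f i w) \<partial>lborel) = (SUP i. integral\<^sup>N lborel (f i))"
    by (rule nn_integral_monotone_convergence_SUP[OF inc meas])
  moreover have "(\<integral>\<^sup>+ w. (SUP i. f i w) \<partial>lborel) = (\<integral>\<^sup>+ w\<in>{0<..<1}. ennreal (F w) \<partial>lborel)"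
    by (simp only: pt)
  moreover have "integral\<^sup>N lborel (f i) = (\<integral>\<^sup>+ w\<in>{0<..<1 - 1 / (real i + 2)}. ennreal (F w) \<partial>lborel)" for i
    unfolding f_def by (rule refl)
  ultimately show ?thesis by simp
qed

context cphi
begin

lemma coef2: assumes "0 < t" "t < 1" shows "0 \<le> (\<phi> t - 1) / (t - 1)" "(\<phi> t - 1) / (t - 1) \<le> 1"
proof -
  have "\<phi> t \<le> 1" "t \<le> \<phi> t" using le1 ge_id assms by auto
  then show "0 \<le> (\<phi> t - 1) / (t - 1)" "(\<phi> t - 1) / (t - 1) \<le> 1" using assms
    by (auto simp: divide_le_eq divide_nonpos_neg)
qed

lemma tm_le_m: assumes X: "X \<in> rv" shows "tm_norm \<phi> X \<le> m_norm \<phi> X + m_norm \<phi> X"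
  unfolding tm_norm_def
proof (rule SUP_least)
  fix t :: real assume t: "t \<in> {0<..<1}"
  have A: "ennreal (\<phi> t / t) * (\<integral>\<^sup>+ w\<in>{0<..<t}. ennreal (drearr X w) \<partial>lborel) \<le> m_norm \<phi> X"
    unfolding m_norm_def using t by (intro SUP_upper2[of t]) auto
  have "ennreal ((\<phi> t - 1) / (t - 1)) * (\<integral>\<^sup>+ w\<in>{t<..<1}. ennreal (drearr X w) \<partial>lborel)
      \<le> 1 * (\<integral>\<^sup>+ w\<in>{0<..<1}. ennreal (drearr X w) \<partial>lborel)"
  proof (rule mult_mono)
    show "ennreal ((\<phi> t - 1) / (t - 1)) \<le> 1" using coef2 t by (simp add: ennreal_le_1)
    show "(\<integral>\<^sup>+ w\<in>{t<..<1}. ennreal (drearr X w) \<partial>lborel) \<le> (\<integral>\<^sup>+ w\<in>{0<..<1}. ennreal (drearr X w) \<partial>lborel)"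
      using t by (intro nn_integral_mono) (auto simp: indicator_def)
  qed auto
  also have "\<dots> = ennreal (\<phi> 1 / 1) * (\<integral>\<^sup>+ w\<in>{0<..<1}. ennreal (drearr X w) \<partial>lborel)" using phi1 by simp
  also have "\<dots> \<le> m_norm \<phi> X" unfolding m_norm_def by (intro SUP_upper2[of 1]) auto
  finally show "ennreal (\<phi> t / t) * (\<integral>\<^sup>+ w\<in>{0<..<t}. ennreal (drearr X w) \<partial>lborel) +
         ennreal ((\<phi> t - 1) / (t - 1)) * (\<integral>\<^sup>+ w\<in>{t<..<1}. ennreal (drearr X w) \<partial>lborel)
         \<le> m_norm \<phi> X + m_norm \<phi> X" using A by (intro add_mono)
qed

lemma tmterm_ge: assumes "t \<in> {0<..<1}"
  shows "ennreal (\<phi> t / t) * (\<integral>\<^sup>+ w\<in>{0<..<t}. ennreal (drearr X w) \<partial>lborel) \<le> tm_norm \<phi> X"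
  unfolding tm_norm_def using assms by (intro SUP_upper2[of t]) (auto intro: add_increasing2)

lemma m_le_tm: assumes X: "X \<in> rv" shows "m_norm \<phi> X \<le> tm_norm \<phi> X"
  unfolding m_norm_def
proof (rule SUP_least)
  fix t :: real assume t: "t \<in> {0<..1}"
  show "ennreal (\<phi> t / t) * (\<integral>\<^sup>+ w\<in>{0<..<t}. ennreal (drearr X w) \<partial>lborel) \<le> tm_norm \<phi> X"
  proof (cases "t = 1")
    case False
    then show ?thesis using t tmterm_ge by auto
  next
    case True
    have "(\<integral>\<^sup>+ w\<in>{0<..<1}. ennreal (drearr X w) \<partial>lborel) = (\<integral>\<^sup>+ w\<in>{0<..<1}. ennreal (FD X w) \<partial>lborel)"
      by (intro int_cong_sub) (simp add: FD_eq)
    also have "\<dots> = (SUP i::nat. (\<integral>\<^sup>+ w\<in>{0<..<1 - 1 / (real i + 2)}. ennreal (FD X w) \<partial>lborel))"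
      by (rule int01_SUP[OF FD_meas[OF X]])
    also have "\<dots> \<le> tm_norm \<phi> X"
    proof (rule SUP_least)
      fix i :: nat
      define s where "s = 1 - 1 / (real i + 2)"
      have s: "0 < s" "s < 1" unfolding s_def by (auto simp: divide_less_eq)
      have "(\<integral>\<^sup>+ w\<in>{0<..<s}. ennreal (FD X w) \<partial>lborel) = (\<integral>\<^sup>+ w\<in>{0<..<s}. ennreal (drearr X w) \<partial>lborel)"
        using s by (intro int_cong_sub) (simp add: FD_eq)
      also have "\<dots> = 1 * \<dots>" by simp
      also have "\<dots> \<le> ennreal (\<phi> s / s) * (\<integral>\<^sup>+ w\<in>{0<..<s}. ennreal (drearr X w) \<partial>lborel)"
        using ge_id[of s] s by (intro mult_right_mono) (auto simp: ennreal_1[symmetric] simp del: ennreal_1 intro!: ennreal_leI)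
      also have "\<dots> \<le> tm_norm \<phi> X" using tmterm_ge s by auto
      finally show "(\<integral>\<^sup>+ w\<in>{0<..<1 - 1 / (real i + 2)}. ennreal (FD X w) \<partial>lborel) \<le> tm_norm \<phi> X"
        unfolding s_def .
    qed
    finally show ?thesis using True phi1 by simp
  qed
qed

end


lemma geo_up_aux:
  fixes q :: "nat \<Rightarrow> real"
  assumes "\<And>n. 0 \<le> q n" "\<And>n. 2 * q n \<le> q (Suc n)"
  shows "(\<Sum>n\<le>M. q n) \<le> 2 * q M"
proof (induction M)
  case 0 then show ?case using assms(1)[of 0] by simp
next
  case (Suc M) then show ?case using assms(2)[of M] by simp
qed

lemma geo_up:
  fixes q :: "nat \<Rightarrow> real"
  assumes "\<And>n. 0 \<le> q n" "\<And>n. 2 * q n \<le> q (Suc n)" "finite S" "\<And>n. n \<in> S \<Longrightarrow> q n \<le> C" "0 \<le> C"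
  shows "(\<Sum>n\<in>S. q n) \<le> 2 * C"
proof (cases "S = {}")
  case False
  define M where "M = Max S"
  have "(\<Sum>n\<in>S. q n) \<le> (\<Sum>n\<le>M. q n)"
    using assms False by (intro sum_mono2) (auto simp: M_def)
  also have "\<dots> \<le> 2 * q M" by (rule geo_up_aux) (use assms in auto)
  also have "\<dots> \<le> 2 * C" using assms(4)[of M] False assms(3) by (simp add: M_def)
  finally show ?thesis .
qed (use assms in simp)

lemma geo_down_aux:
  fixes r :: "nat \<Rightarrow> real"
  assumes "\<And>n. 0 \<le> r n" "\<And>n. 2 * r (Suc n) \<le> r n"
  shows "(\<Sum>i<K. r (i + m)) + 2 * r (K + m) \<le> 2 * r m"
proof (induction K)
  case 0 then show ?case by simp
next
  case (Suc K) then show ?case using assms(2)[of "K + m"] by simp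
qed

lemma geo_down:
  fixes r :: "nat \<Rightarrow> real"
  assumes "\<And>n. 0 \<le> r n" "\<And>n. 2 * r (Suc n) \<le> r n" "finite S" "\<And>n. n \<in> S \<Longrightarrow> r n \<le> C" "0 \<le> C"
  shows "(\<Sum>n\<in>S. r n) \<le> 2 * C"
proof (cases "S = {}")
  case False
  define m where "m = Min S"
  define K where "K = Max S + 1 - m"
  have mS: "m \<in> S" using False assms(3) by (simp add: m_def)
  have bnd: "m \<le> x \<and> x \<le> Max S" if "x \<in> S" for x
    using that assms(3) by (simp add: m_def)
  have "(\<Sum>n\<in>S. r n) \<le> (\<Sum>n\<in>{0 + m..<K + m}. r n)"
  proof (intro sum_mono2)
    show "S \<subseteq> {0 + m..<K + m}" using bnd mS by (force simp: K_def)
  qed (use assms in auto)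
  also have "\<dots> = (\<Sum>i\<in>{0..<K}. r (i + m))" by (rule sum.shift_bounds_nat_ivl)
  also have "\<dots> \<le> 2 * r m" using geo_down_aux[where r=r and K=K and m=m, OF assms(1,2)] assms(1)[of "K+m"] by (simp add: atLeast0LessThan)
  also have "\<dots> \<le> 2 * C" using assms(4)[OF mS] by simp
  finally show ?thesis .
qed (use assms in simp)

lemma Pspace_Ico: assumes "0 \<le> a" "a \<le> b" "b \<le> 1" shows "measure Pspace {a..<b} = b - a"
proof -
  have "measure Pspace {a..<b} = measure lebesgue {a..<b}"
    using assms by (intro measure_restrict_space) auto
  then show ?thesis using assms by simp
qed

lemma Pspace_Ioc: assumes "0 \<le> a" "a \<le> b" "b \<le> 1" shows "measure Pspace {a<..b} = b - a"
proof -
  have "measure Pspace {a<..b} = measure lebesgue {a<..b}"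
    using assms by (intro measure_restrict_space) auto
  then show ?thesis using assms by simp
qed

lemma Pspace_sets: assumes "A \<subseteq> {0..1}" "A \<in> sets borel" shows "A \<in> sets Pspace"
  using assms by (subst sets_restrict_space_iff) auto

lemma drearr_upper:
  assumes X: "X \<in> rv" and nn: "\<And>x. 0 \<le> X x"
    and anti: "\<And>x y. 0 < x \<Longrightarrow> x \<le> y \<Longrightarrow> y \<le> 1 \<Longrightarrow> X y \<le> X x"
    and w: "0 < w" "w < 1"
  shows "drearr X w \<le> X w"
proof -
  interpret finite_measure Pspace by (rule finite_measure_lebesgue_on) auto
  have Xm[measurable]: "X \<in> borel_measurable Pspace" using X by (simp add: rv_def)
  have sub: "{x \<in> {0..1}. \<bar>X x\<bar> > X w} \<subseteq> {0..<w}"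
  proof (rule subsetI)
    fix x assume "x \<in> {x \<in> {0..1}. \<bar>X x\<bar> > X w}"
    then have x: "x \<in> {0..1}" "\<bar>X x\<bar> > X w" by auto
    have "x < w"
    proof (rule ccontr)
      assume "\<not> x < w"
      then have "X x \<le> X w" using anti[of w x] w x by simp
      then show False using x nn[of x] by simp
    qed
    then show "x \<in> {0..<w}" using x by simp
  qed
  have "measure Pspace {x \<in> {0..1}. \<bar>X x\<bar> > X w} \<le> measure Pspace {0..<w}"
    using w by (intro finite_measure_mono sub Pspace_sets) auto
  also have "\<dots> = w" using Pspace_Ico[of 0 w] w by simp
  finally have "X w \<in> DS X w" using nn[of w] by (simp add: DS_def)
  then show ?thesis unfolding drearr_DS by (intro cInf_lower DS_bdd)
qed

lemma drearr_lower:
  assumes X: "X \<in> rv" and nn: "\<And>x. 0 \<le> X x"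
    and anti: "\<And>x y. 0 < x \<Longrightarrow> x \<le> y \<Longrightarrow> y \<le> 1 \<Longrightarrow> X y \<le> X x"
    and w: "0 < w" "w < w'" "w' \<le> 1"
  shows "X w' \<le> drearr X w"
  unfolding drearr_DS
proof (rule cInf_greatest)
  show "DS X w \<noteq> {}" using DS_nonempty X w by simp
  interpret finite_measure Pspace by (rule finite_measure_lebesgue_on) auto
  have Xm[measurable]: "X \<in> borel_measurable Pspace" using X by (simp add: rv_def)
  fix l assume l: "l \<in> DS X w"
  show "X w' \<le> l"
  proof (rule ccontr)
    assume "\<not> X w' \<le> l"
    then have lt: "l < X w'" by simp
    have sub: "{0<..w'} \<subseteq> {x \<in> {0..1}. \<bar>X x\<bar> > l}"
    proof (rule subsetI)
      fix x assume x: "x \<in> {0<..w'}"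
      have "X w' \<le> X x" using anti[of x w'] x w by simp
      then have "\<bar>X x\<bar> > l" using lt nn[of x] by simp
      then show "x \<in> {x \<in> {0..1}. \<bar>X x\<bar> > l}" using x w by simp
    qed
    have "{x \<in> {0..1}. \<bar>X x\<bar> > l} = {x \<in> space Pspace. \<bar>X x\<bar> > l}" by simp
    also have "\<dots> \<in> sets Pspace" by measurable
    finally have "measure Pspace {0<..w'} \<le> measure Pspace {x \<in> {0..1}. \<bar>X x\<bar> > l}"
      by (intro finite_measure_mono sub)
    then have "w' \<le> measure Pspace {x \<in> {0..1}. \<bar>X x\<bar> > l}" using Pspace_Ioc[of 0 w'] w by simp
    moreover have "measure Pspace {x \<in> {0..1}. \<bar>X x\<bar> > l} \<le> w" using l by (simp add: DS_def)
    ultimately show False using w by simp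
  qed
qed


context cphi
begin

lemma choose_next:
  assumes t: "0 < t" "t \<le> 1"
  shows "\<exists>s. 0 < s \<and> s < t \<and> \<phi> s \<le> \<phi> t / 2 \<and> s / \<phi> s \<le> (t / \<phi> t) / 2"
proof -
  have pt: "0 < \<phi> t" using pos t by simp
  have e: "0 < \<phi> t / 2" using pt by simp
  obtain d where d: "d > 0" "\<forall>x'\<in>{0..1}. dist x' 0 < d \<longrightarrow> dist (\<phi> x') (\<phi> 0) < \<phi> t / 2"
    using cont0 e unfolding continuous_within_eps_delta by blast
  have ev1: "\<forall>\<^sub>F h in at_right 0. 2 * \<phi> t / t \<le> (\<phi> h - \<phi> 0) / h"
    using inf0 unfolding filterlim_at_top by blast
  have "0 < min t d" using t d by simp
  then have ev2: "\<forall>\<^sub>F h in at_right 0. h \<in> {0<..<min t d}" by (rule eventually_at_right_real)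
  have "\<exists>h. 2 * \<phi> t / t \<le> (\<phi> h - \<phi> 0) / h \<and> h \<in> {0<..<min t d}"
    by (rule eventually_happens'[OF _ eventually_conj[OF ev1 ev2]]) simp
  then obtain h where h: "2 * \<phi> t / t \<le> \<phi> h / h" "0 < h" "h < t" "h < d" using phi0 by auto
  have h1: "h \<le> 1" using h t by simp
  have ph: "0 < \<phi> h" using pos h h1 by simp
  have "dist (\<phi> h) (\<phi> 0) < \<phi> t / 2" using d h h1 by (auto simp: dist_real_def)
  then have A: "\<phi> h \<le> \<phi> t / 2" using phi0 ph by (simp add: dist_real_def)
  have "2 * \<phi> t * h \<le> \<phi> h * t" using h t by (simp add: field_simps)
  then have B: "h / \<phi> h \<le> (t / \<phi> t) / 2" using ph pt by (simp add: field_simps)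
  show ?thesis using A B h by blast
qed

end


context cphi
begin

definition nxt :: "real \<Rightarrow> real" where
  "nxt t = (SOME s. 0 < s \<and> s < t \<and> \<phi> s \<le> \<phi> t / 2 \<and> s / \<phi> s \<le> (t / \<phi> t) / 2)"

primrec tt :: "nat \<Rightarrow> real" where
  "tt 0 = 1/2"
| "tt (Suc n) = nxt (tt n)"

lemma nxt_spec: assumes "0 < t" "t \<le> 1"
  shows "0 < nxt t \<and> nxt t < t \<and> \<phi> (nxt t) \<le> \<phi> t / 2 \<and> nxt t / \<phi> (nxt t) \<le> (t / \<phi> t) / 2"
  unfolding nxt_def using someI_ex[OF choose_next[OF assms]] .

lemma tt_range: "0 < tt n \<and> tt n \<le> 1/2"
proof (induction n)
  case (Suc n) then show ?case using nxt_spec[of "tt n"] by auto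
qed simp

lemma tt_pos: "0 < tt n" and tt_le: "tt n \<le> 1/2" using tt_range by auto

lemma tt_step: "tt (Suc n) < tt n" "\<phi> (tt (Suc n)) \<le> \<phi> (tt n) / 2"
  "tt (Suc n) / \<phi> (tt (Suc n)) \<le> (tt n / \<phi> (tt n)) / 2"
  using nxt_spec[of "tt n"] tt_range[of n] by auto

lemma tt_anti: "m \<le> n \<Longrightarrow> tt n \<le> tt m"
  using decseqD[OF decseq_SucI[of tt]] tt_step(1) less_imp_le by blast

lemma phitt_pos: "0 < \<phi> (tt n)" using pos tt_range[of n] by simp

lemma phitt_pow: "\<phi> (tt n) \<le> (1/2)^n"
proof (induction n)
  case 0 then show ?case using le1[of "tt 0"] tt_range[of 0] by simp
next
  case (Suc n) then show ?case using tt_step(2)[of n] by simp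
qed

lemma tt_pow: "tt n \<le> (1/2)^n"
  using ge_id[of "tt n"] tt_range[of n] phitt_pow[of n] by simp

definition aa :: "nat \<Rightarrow> real" where "aa n = 1 / \<phi> (tt n)"

definition XX :: "real \<Rightarrow> real" where "XX x = (\<Sum>n. aa n * indicator {0<..<tt n} x)"

lemma aa_pos: "0 < aa n" using phitt_pos by (simp add: aa_def)

lemma XX_summable: "summable (\<lambda>n. aa n * indicator {0<..<tt n} x)"
proof (cases "0 < x")
  case True
  obtain N where N: "(1/2::real)^N < x" using real_arch_pow_inv[OF True, of "1/2"] by auto
  have "aa n * indicator {0<..<tt n} x = 0" if "n \<notin> {..<N}" for n
  proof -
    have "tt n \<le> (1/2)^n" by (rule tt_pow)
    also have "\<dots> \<le> (1/2)^N" using that by (intro power_decreasing) auto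
    finally have "x \<notin> {0<..<tt n}" using N by auto
    then show ?thesis by simp
  qed
  then show ?thesis by (intro sums_summable[OF sums_finite[of "{..<N}"]]) auto
next
  case False
  then have "(\<lambda>n. aa n * indicator {0<..<tt n} x) = (\<lambda>n. 0)" by (auto simp: fun_eq_iff)
  then show ?thesis by simp
qed

lemma XX_nonneg: "0 \<le> XX x"
  unfolding XX_def using aa_pos by (intro suminf_nonneg[OF XX_summable] mult_nonneg_nonneg) (auto intro: less_imp_le)

lemma XX_anti: assumes "0 < x" "x \<le> y" shows "XX y \<le> XX x"
  unfolding XX_def
proof (rule suminf_le[OF _ XX_summable XX_summable])
  fix n show "aa n * indicator {0<..<tt n} y \<le> aa n * indicator {0<..<tt n} x"
    using assms aa_pos[of n] by (auto simp: indicator_def)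
qed

lemma XX_borel: "XX \<in> borel_measurable borel"
  unfolding XX_def[abs_def] by measurable

lemma XX_rv: "XX \<in> rv"
proof -
  have "XX \<in> borel_measurable lebesgue" using XX_borel by (simp add: measurable_completion)
  then show ?thesis unfolding rv_def by (rule measurable_restrict_space1)
qed

end


context cphi
begin

lemma partial_bound:
  assumes t: "0 < t" "t \<le> 1"
  shows "(\<Sum>n<N. \<phi> t / t * (aa n * min (tt n) t)) \<le> 4"
proof -
  have pt: "0 < \<phi> t" using pos t by simp
  define q where "q n = 1 / \<phi> (tt n)" for n
  define r where "r n = tt n / \<phi> (tt n)" for n
  define A where "A n = (if \<phi> t \<le> \<phi> (tt n) then \<phi> t * q n else 0)" for n
  define B where "B n = (if r n \<le> t / \<phi> t then \<phi> t / t * r n else 0)" for n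
  have tb: "\<phi> t / t * (aa n * min (tt n) t) \<le> A n + B n" for n
  proof (cases "t \<le> tt n")
    case True
    have "\<phi> t \<le> \<phi> (tt n)" using mono[of t "tt n"] True t tt_le[of n] by simp
    moreover have "0 \<le> B n" using pt t phitt_pos[of n] tt_pos[of n] by (auto simp: B_def r_def)
    moreover have "\<phi> t / t * (aa n * min (tt n) t) = \<phi> t * q n" using True t by (simp add: aa_def q_def)
    ultimately show ?thesis by (simp add: A_def)
  next
    case False
    have "\<phi> t / t \<le> \<phi> (tt n) / tt n" using ratio[of "tt n" t] False t tt_pos[of n] by simp
    then have "r n \<le> t / \<phi> t" using pt t phitt_pos[of n] tt_pos[of n] by (simp add: r_def field_simps)
    moreover have "0 \<le> A n" using pt phitt_pos[of n] by (auto simp: A_def q_def)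
    moreover have eq: "aa n * min (tt n) t = r n" using False by (simp add: aa_def r_def min_def)
    ultimately have "B n = \<phi> t / t * (aa n * min (tt n) t)" by (simp add: B_def)
    then show ?thesis using \<open>0 \<le> A n\<close> by simp
  qed
  have qpos: "0 \<le> q n" for n using phitt_pos[of n] by (simp add: q_def)
  have q2: "2 * q n \<le> q (Suc n)" for n
    using tt_step(2)[of n] phitt_pos[of n] phitt_pos[of "Suc n"] by (simp add: q_def field_simps)
  have rpos: "0 \<le> r n" for n using phitt_pos[of n] tt_pos[of n] by (simp add: r_def)
  have r2: "2 * r (Suc n) \<le> r n" for n using tt_step(3)[of n] by (simp add: r_def)
  have SA: "(\<Sum>n<N. A n) \<le> 2"
  proof -
    have "(\<Sum>n<N. A n) = (\<Sum>n\<in>{n\<in>{..<N}. \<phi> t \<le> \<phi> (tt n)}. \<phi> t * q n)"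
      unfolding A_def by (rule sum.inter_filter[symmetric]) simp
    also have "\<dots> = \<phi> t * (\<Sum>n\<in>{n\<in>{..<N}. \<phi> t \<le> \<phi> (tt n)}. q n)" by (simp add: sum_distrib_left)
    also have "\<dots> \<le> \<phi> t * (2 * (1 / \<phi> t))"
    proof (intro mult_left_mono geo_up[where q=q, OF qpos q2])
      fix n assume "n \<in> {n\<in>{..<N}. \<phi> t \<le> \<phi> (tt n)}"
      then show "q n \<le> 1 / \<phi> t" using pt phitt_pos[of n] by (simp add: q_def frac_le)
    qed (use pt in auto)
    also have "\<dots> = 2" using pt by simp
    finally show ?thesis .
  qed
  have SB: "(\<Sum>n<N. B n) \<le> 2"
  proof -
    have "(\<Sum>n<N. B n) = (\<Sum>n\<in>{n\<in>{..<N}. r n \<le> t / \<phi> t}. \<phi> t / t * r n)"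
      unfolding B_def by (rule sum.inter_filter[symmetric]) simp
    also have "\<dots> = \<phi> t / t * (\<Sum>n\<in>{n\<in>{..<N}. r n \<le> t / \<phi> t}. r n)" by (simp add: sum_distrib_left)
    also have "\<dots> \<le> \<phi> t / t * (2 * (t / \<phi> t))"
      by (intro mult_left_mono geo_down[where r=r, OF rpos r2]) (use pt t in auto)
    also have "\<dots> = 2" using pt t by simp
    finally show ?thesis .
  qed
  have "(\<Sum>n<N. \<phi> t / t * (aa n * min (tt n) t)) \<le> (\<Sum>n<N. A n + B n)" by (intro sum_mono tb)
  also have "\<dots> = (\<Sum>n<N. A n) + (\<Sum>n<N. B n)" by (simp add: sum.distrib)
  also have "\<dots> \<le> 4" using SA SB by simp
  finally show ?thesis .
qed

lemma XX_int:
  assumes t: "0 < t"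
  shows "(\<integral>\<^sup>+ w\<in>{0<..<t}. ennreal (XX w) \<partial>lborel) = (\<Sum>n. ennreal (aa n * min (tt n) t))"
proof -
  define f where "f n w = ennreal (aa n) * indicator {0<..<min (tt n) t} w" for n w
  have pt: "ennreal (XX w) * indicator {0<..<t} w = (\<Sum>n. f n w)" for w
  proof -
    have "ennreal (XX w) = (\<Sum>n. ennreal (aa n * indicator {0<..<tt n} w))"
      unfolding XX_def using aa_pos
      by (intro suminf_ennreal2[symmetric] XX_summable mult_nonneg_nonneg) (auto intro: less_imp_le)
    then have "ennreal (XX w) * indicator {0<..<t} w = (\<Sum>n. indicator {0<..<t} w * ennreal (aa n * indicator {0<..<tt n} w))"
      by (simp add: mult.commute)
    also have "\<dots> = (\<Sum>n. f n w)"
    proof (rule suminf_cong)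
      fix n show "indicator {0<..<t} w * ennreal (aa n * indicator {0<..<tt n} w) = f n w"
        by (auto simp: f_def indicator_def)
    qed
    finally show ?thesis .
  qed
  have "(\<integral>\<^sup>+ w\<in>{0<..<t}. ennreal (XX w) \<partial>lborel) = (\<integral>\<^sup>+ w. (\<Sum>n. f n w) \<partial>lborel)"
    by (simp add: pt)
  also have "\<dots> = (\<Sum>n. integral\<^sup>N lborel (f n))"
    by (rule nn_integral_suminf) (simp add: f_def)
  also have "\<dots> = (\<Sum>n. ennreal (aa n * min (tt n) t))"
  proof (rule suminf_cong)
    fix n
    have "integral\<^sup>N lborel (f n) = ennreal (aa n) * emeasure lborel {0<..<min (tt n) t}"
      unfolding f_def by (rule nn_integral_cmult_indicator) simp
    also have "\<dots> = ennreal (aa n * min (tt n) t)"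
      using aa_pos[of n] tt_pos[of n] t by (simp add: ennreal_mult)
    finally show "integral\<^sup>N lborel (f n) = ennreal (aa n * min (tt n) t)" .
  qed
  finally show ?thesis .
qed

lemma mterm_XX:
  assumes t: "0 < t" "t \<le> 1"
  shows "ennreal (\<phi> t / t) * (\<integral>\<^sup>+ w\<in>{0<..<t}. ennreal (drearr XX w) \<partial>lborel) \<le> 4"
proof -
  have "(\<integral>\<^sup>+ w\<in>{0<..<t}. ennreal (drearr XX w) \<partial>lborel) \<le> (\<integral>\<^sup>+ w\<in>{0<..<t}. ennreal (XX w) \<partial>lborel)"
  proof (intro nn_integral_mono)
    fix w
    show "ennreal (drearr XX w) * indicator {0<..<t} w \<le> ennreal (XX w) * indicator {0<..<t} w"
    proof (cases "0 < w \<and> w < t")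
      case True
      then have "drearr XX w \<le> XX w" using t
        by (intro drearr_upper[OF XX_rv XX_nonneg]) (auto intro: XX_anti)
      then show ?thesis using True by (simp add: ennreal_leI)
    qed auto
  qed
  then have "ennreal (\<phi> t / t) * (\<integral>\<^sup>+ w\<in>{0<..<t}. ennreal (drearr XX w) \<partial>lborel)
      \<le> ennreal (\<phi> t / t) * (\<Sum>n. ennreal (aa n * min (tt n) t))"
    using XX_int[OF t(1)] by (simp add: mult_left_mono)
  also have "\<dots> = (\<Sum>n. ennreal (\<phi> t / t) * ennreal (aa n * min (tt n) t))"
    by (rule ennreal_suminf_cmult[symmetric])
  also have "\<dots> = (\<Sum>n. ennreal (\<phi> t / t * (aa n * min (tt n) t)))"
  proof (rule suminf_cong)
    fix n show "ennreal (\<phi> t / t) * ennreal (aa n * min (tt n) t) = ennreal (\<phi> t / t * (aa n * min (tt n) t))"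
      using pos[of t] t by (intro ennreal_mult'[symmetric]) simp
  qed
  also have "\<dots> \<le> 4"
    unfolding suminf_eq_SUP
  proof (rule SUP_least)
    fix N
    have "(\<Sum>n<N. ennreal (\<phi> t / t * (aa n * min (tt n) t))) = ennreal (\<Sum>n<N. \<phi> t / t * (aa n * min (tt n) t))"
      using pos[of t] t aa_pos tt_pos by (intro sum_ennreal) (auto intro!: mult_nonneg_nonneg less_imp_le)
    also have "\<dots> \<le> ennreal 4" by (intro ennreal_leI partial_bound t)
    finally show "(\<Sum>n<N. ennreal (\<phi> t / t * (aa n * min (tt n) t))) \<le> 4" by simp
  qed
  finally show ?thesis .
qed

lemma m_XX: "m_norm \<phi> XX \<le> 4"
  unfolding m_norm_def using mterm_XX by (intro SUP_least) auto

end


context cphi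
begin

lemma lor_XX_ge: "ennreal (real N / 2) \<le> lorentz_norm \<phi> XX"
proof -
  define h where "h n w = ennreal (aa n) * (ennreal (GD w) * indicator {0<..<tt n / 2} w)" for n w
  have pt: "(\<Sum>n<N. h n w) \<le> ennreal (drearr XX w * rderiv \<phi> w) * indicator {0<..<1} w" for w
  proof (cases "0 < w \<and> 2 * w \<le> 1")
    case True
    have w1: "w < 1" using True by simp
    have "(\<Sum>n<N. aa n * indicator {0<..<tt n} (2 * w)) \<le> XX (2 * w)"
      unfolding XX_def using aa_pos
      by (intro sum_le_suminf[OF XX_summable] mult_nonneg_nonneg) (auto intro: less_imp_le)
    also have "\<dots> \<le> drearr XX w" using True
      by (intro drearr_lower[OF XX_rv XX_nonneg]) (auto intro: XX_anti)
    finally have A: "(\<Sum>n<N. aa n * indicator {0<..<tt n / 2} w) \<le> drearr XX w"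
      by (simp add: indicator_def mult.commute)
    have g: "GD w = rderiv \<phi> w" "0 \<le> rderiv \<phi> w" using True w1 rd_nonneg[of w] by (auto simp: GD_def)
    have nn: "0 \<le> aa n * indicator {0<..<tt n / 2} w" for n using aa_pos[of n] by (simp add: indicator_def)
    have "(\<Sum>n<N. h n w) = (\<Sum>n<N. ennreal (aa n * indicator {0<..<tt n / 2} w * rderiv \<phi> w))"
    proof (rule sum.cong)
      fix n show "h n w = ennreal (aa n * indicator {0<..<tt n / 2} w * rderiv \<phi> w)"
        using aa_pos[of n] g by (auto simp: h_def indicator_def ennreal_mult)
    qed simp
    also have "\<dots> = ennreal (\<Sum>n<N. aa n * indicator {0<..<tt n / 2} w * rderiv \<phi> w)"
      using nn g by (intro sum_ennreal) auto
    also have "\<dots> = ennreal ((\<Sum>n<N. aa n * indicator {0<..<tt n / 2} w) * rderiv \<phi> w)"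
      by (simp only: sum_distrib_right)
    also have "\<dots> \<le> ennreal (drearr XX w * rderiv \<phi> w)"
      using A g by (intro ennreal_leI mult_right_mono) auto
    finally show ?thesis using True w1 by simp
  next
    case False
    have "h n w = 0" for n
    proof -
      have "tt n / 2 \<le> 1/4" using tt_le[of n] by simp
      then have "w \<notin> {0<..<tt n / 2}" using False by auto
      then show ?thesis by (simp add: h_def)
    qed
    then show ?thesis by simp
  qed
  have "(\<integral>\<^sup>+ w. (\<Sum>n<N. h n w) \<partial>lborel) = (\<Sum>n<N. integral\<^sup>N lborel (h n))"
    using GD_meas by (intro nn_integral_sum) (simp add: h_def)
  also have "\<dots> \<ge> (\<Sum>n<N. ennreal (1/2))"
  proof (rule sum_mono)
    fix n
    have tn: "0 < tt n / 2" "tt n / 2 \<le> 1" using tt_pos[of n] tt_le[of n] by auto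
    have "integral\<^sup>N lborel (h n) = ennreal (aa n) * (\<integral>\<^sup>+ w\<in>{0<..<tt n / 2}. ennreal (GD w) \<partial>lborel)"
      unfolding h_def using GD_meas by (subst nn_integral_cmult[symmetric]) (auto simp: mult.assoc)
    also have "(\<integral>\<^sup>+ w\<in>{0<..<tt n / 2}. ennreal (GD w) \<partial>lborel) = (\<integral>\<^sup>+ w\<in>{0<..<tt n / 2}. ennreal (rderiv \<phi> w) \<partial>lborel)"
      using tn by (intro int_cong_sub) (auto simp: GD_def)
    also have "ennreal (aa n) * \<dots> \<ge> ennreal (aa n) * ennreal (\<phi> (tt n / 2))"
      using int_ge[OF tn] by (intro mult_left_mono) auto
    also have "ennreal (aa n) * ennreal (\<phi> (tt n / 2)) = ennreal (aa n * \<phi> (tt n / 2))"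
      using aa_pos[of n] by (intro ennreal_mult'[symmetric]) simp
    finally have I: "ennreal (aa n * \<phi> (tt n / 2)) \<le> integral\<^sup>N lborel (h n)" .
    have "aa n * \<phi> (tt n / 2) \<ge> 1/2"
    proof -
      have "\<phi> (tt n) / 2 \<le> \<phi> (tt n / 2)" using half[of "tt n"] tt_pos[of n] tt_le[of n] by simp
      then have "aa n * (\<phi> (tt n) / 2) \<le> aa n * \<phi> (tt n / 2)" using aa_pos[of n] by (intro mult_left_mono) auto
      moreover have "aa n * (\<phi> (tt n) / 2) = 1/2" using phitt_pos[of n] by (simp add: aa_def)
      ultimately show ?thesis by simp
    qed
    then have "ennreal (1/2) \<le> ennreal (aa n * \<phi> (tt n / 2))" by (rule ennreal_leI)
    then show "ennreal (1/2) \<le> integral\<^sup>N lborel (h n)" using I by (rule order_trans)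
  qed
  finally have "(\<Sum>n<N. ennreal (1/2)) \<le> lorentz_norm \<phi> XX"
    using nn_integral_mono[of lborel "\<lambda>w. (\<Sum>n<N. h n w)", OF pt] unfolding lorentz_norm_def by simp
  moreover have "(\<Sum>n<N. ennreal (1/2)) = ennreal (real N / 2)"
    by (subst sum_ennreal) auto
  ultimately show ?thesis by simp
qed

lemma lor_XX_inf: "lorentz_norm \<phi> XX = \<infinity>"
proof (rule ccontr)
  assume "lorentz_norm \<phi> XX \<noteq> \<infinity>"
  then obtain L where L: "lorentz_norm \<phi> XX = ennreal L" "0 \<le> L" by (cases "lorentz_norm \<phi> XX") auto
  define N where "N = nat \<lceil>2 * L\<rceil> + 1"
  have "2 * L < real N" unfolding N_def by linarith
  then have "L < real N / 2" by simp
  moreover have "ennreal (real N / 2) \<le> ennreal L" using lor_XX_ge[of N] L by simp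
  ultimately show False using L by (simp add: ennreal_le_iff)
qed

end


theorem corollary31:
  fixes \<phi> :: "real \<Rightarrow> real"
  assumes "\<forall>x\<in>{0..1}. \<phi> x \<in> {0..1}"
    and "concave_on {0..1} \<phi>"
    and "\<phi> 0 = 0" and "\<phi> 1 = 1"
    and "continuous (at 0 within {0..1}) \<phi>"
    and "filterlim (\<lambda>h. (\<phi> h - \<phi> 0) / h) at_top (at_right 0)"
  shows "Lorentz_space \<phi> \<subset> TM_space \<phi> \<and> TM_space \<phi> = M_space \<phi>"
proof -
  interpret cphi \<phi> using assms by unfold_locales
  have eq: "TM_space \<phi> = M_space \<phi>"
  proof safe
    fix X assume "X \<in> TM_space \<phi>"
    then have X: "X \<in> rv" "tm_norm \<phi> X < \<infinity>" by (auto simp: TM_space_def)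
    then have "m_norm \<phi> X < \<infinity>" using m_le_tm[OF X(1)] by (meson order.strict_trans1)
    then show "X \<in> M_space \<phi>" using X by (simp add: M_space_def)
  next
    fix X assume "X \<in> M_space \<phi>"
    then have X: "X \<in> rv" "m_norm \<phi> X < \<infinity>" by (auto simp: M_space_def)
    then have "m_norm \<phi> X + m_norm \<phi> X < \<infinity>" by simp
    then have "tm_norm \<phi> X < \<infinity>" using tm_le_m[OF X(1)] by (meson order.strict_trans1)
    then show "X \<in> TM_space \<phi>" using X by (simp add: TM_space_def)
  qed
  have sub: "Lorentz_space \<phi> \<subseteq> M_space \<phi>"
  proof
    fix X assume "X \<in> Lorentz_space \<phi>"
    then have X: "X \<in> rv" "lorentz_norm \<phi> X < \<infinity>" by (auto simp: Lorentz_space_def)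
    then have "m_norm \<phi> X < \<infinity>" using m_le_lorentz[OF X(1)] by (meson order.strict_trans1)
    then show "X \<in> M_space \<phi>" using X by (simp add: M_space_def)
  qed
  have "XX \<in> M_space \<phi>"
  proof -
    have "(4::ennreal) < \<infinity>" by simp
    then have "m_norm \<phi> XX < \<infinity>" using m_XX by (rule le_less_trans[rotated])
    then show ?thesis using XX_rv by (simp add: M_space_def)
  qed
  moreover have "XX \<notin> Lorentz_space \<phi>" using lor_XX_inf by (simp add: Lorentz_space_def)
  ultimately have "Lorentz_space \<phi> \<subset> M_space \<phi>" using sub by blast
  then show ?thesis using eq by simp
qed

end
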